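(* Let $\tau$ be an untwisted skew product with group component $\mathbb Z^d$, height function $h$, and base shift a transitive subshift of finite type $(\Sigma,\sigma)$. For any surjective homomorphism $L:\mathbb Z^d\to\mathbb Z$ there exists $C>0$ such that: if there are $s\in\Sigma$ and $n>0$ with $L(h(s,n))>C$, then there is a periodic point $s'$ (of some period $n'$) with $\hat L(\mathrm{rot}(s'))>0$; and if there are $s$, $n>0$ with $L(h(s,n))<-C$, then there is a point $s''$ with $\hat L(\mathrm{rot}(s''))<0$. Consequently, $0\in\mathrm{Int}(\mathrm{rot}(\tau))$ if and only if for every surjective homomorphism $L:\mathbb Z^d\to\mathbb Z$, $\sup\{L(h(s,m)):s\in\Sigma,\ m\in\mathbb N\}=\infty$.
   Context: Subshift of finite type $(\Sigma,\sigma)$: finite state set, $\{0,1\}$ transition matrix, $\Sigma$ the bi-infinite allowed sequences, $\sigma$ left shift; transitive means any state can reach any other through an allowed word. Untwisted skew product: $\tau(s,n)=(\sigma s,n+h(s))$, $h:\Sigma\to\mathbb Z^d$ depending only on $(s_0,s_1)$. $h(s,n)=\sum_{i=0}^{n-1}h(\sigma^is)$; $\mathrm{rot}(s)=\lim_{n\to\infty}h(s,n)/n$ when it exists; $\mathrm{rot}(\tau)$ the set of all rotation vectors, interior in $\mathbb R^d$. $\hat L:\mathbb R^d\to\mathbb R$ is the linear extension of $L$. *)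

theory Defs
  imports "HOL-Analysis.Analysis"
begin

text \<open>Subshift of finite type over the finite state type 'a with 0/1 transition
  matrix A (given as a boolean relation). Points are bi-infinite sequences int => 'a.\<close>

definition sft :: "('a \<Rightarrow> 'a \<Rightarrow> bool) \<Rightarrow> (int \<Rightarrow> 'a) set" where
  "sft A = {s. \<forall>i. A (s i) (s (i + 1))}"

definition shift :: "(int \<Rightarrow> 'a) \<Rightarrow> (int \<Rightarrow> 'a)" where
  "shift s = (\<lambda>i. s (i + 1))"

definition sft_transitive :: "('a \<Rightarrow> 'a \<Rightarrow> bool) \<Rightarrow> bool" where
  "sft_transitive A \<longleftrightarrow> (\<forall>a b. (a, b) \<in> {(x, y). A x y}\<^sup>+)"

definition height :: "('a \<Rightarrow> 'a \<Rightarrow> int ^ 'd) \<Rightarrow> (int \<Rightarrow> 'a) \<Rightarrow> int ^ 'd" where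
  "height H s = H (s 0) (s 1)"

definition hsum :: "('a \<Rightarrow> 'a \<Rightarrow> int ^ 'd) \<Rightarrow> (int \<Rightarrow> 'a) \<Rightarrow> nat \<Rightarrow> int ^ 'd" where
  "hsum H s n = (\<Sum>i<n. height H ((shift ^^ i) s))"

definition int_vec_to_real :: "int ^ 'd \<Rightarrow> real ^ 'd" where
  "int_vec_to_real x = (\<chi> i. real_of_int (x $ i))"

definition has_rot :: "('a \<Rightarrow> 'a \<Rightarrow> int ^ 'd) \<Rightarrow> (int \<Rightarrow> 'a) \<Rightarrow> real ^ 'd \<Rightarrow> bool" where
  "has_rot H s v \<longleftrightarrow> ((\<lambda>n. (1 / real n) *\<^sub>R int_vec_to_real (hsum H s n)) \<longlonglongrightarrow> v)"

definition rot_set :: "('a \<Rightarrow> 'a \<Rightarrow> bool) \<Rightarrow> ('a \<Rightarrow> 'a \<Rightarrow> int ^ 'd) \<Rightarrow> (real ^ 'd) set" where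
  "rot_set A H = {v. \<exists>s \<in> sft A. has_rot H s v}"

definition periodic_pt :: "(int \<Rightarrow> 'a) \<Rightarrow> nat \<Rightarrow> bool" where
  "periodic_pt s n \<longleftrightarrow> n > 0 \<and> (shift ^^ n) s = s"

definition is_surj_hom :: "(int ^ 'd \<Rightarrow> int) \<Rightarrow> bool" where
  "is_surj_hom L \<longleftrightarrow> (\<forall>x y. L (x + y) = L x + L y) \<and> surj L"

definition lin_ext :: "(int ^ 'd \<Rightarrow> int) \<Rightarrow> real ^ 'd \<Rightarrow> real" where
  "lin_ext L v = (\<Sum>i\<in>UNIV. real_of_int (L (axis i 1)) * v $ i)"

end

theory Submission
  imports Defs "HOL-Real_Asymp.Real_Asymp"
begin

fun wsum :: "('a \<Rightarrow> 'a \<Rightarrow> 'b::comm_monoid_add) \<Rightarrow> 'a list \<Rightarrow> 'b" where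
  "wsum g (x # y # zs) = g x y + wsum g (y # zs)"
| "wsum g _ = 0"

lemma wsum_append: "wsum g (xs @ y # ys) = wsum g (xs @ [y]) + wsum g (y # ys)"
proof (induction xs)
  case Nil then show ?case by simp
next
  case (Cons a xs) then show ?case by (cases xs) (auto simp: add.assoc)
qed

lemma wsum_snoc: "wsum g (xs @ [y, z]) = wsum g (xs @ [y]) + g y z"
  using wsum_append[of g xs y "[z]"] by simp

lemma wsum_nth: "wsum g xs = (\<Sum>i<length xs - 1. g (xs!i) (xs!Suc i))"
proof (induction g xs rule: wsum.induct)
  case (1 g x y zs)
  have "(\<Sum>i<length (x # y # zs) - 1. g ((x # y # zs)!i) ((x # y # zs)!Suc i))
      = g x y + (\<Sum>i<length (y # zs) - 1. g ((y # zs)!i) ((y # zs)!Suc i))"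
    by (simp del: sum.lessThan_Suc add: sum.lessThan_Suc_shift)
  with 1 show ?case by simp
qed auto

lemma wsum_le:
  fixes g :: "'a \<Rightarrow> 'a \<Rightarrow> int"
  assumes "\<And>a b. g a b \<le> M"
  shows "wsum g xs \<le> int (length xs - 1) * M"
  using assms
proof (induction g xs rule: wsum.induct)
  case (1 g x y zs)
  have a: "g x y \<le> M" using 1 by simp
  have b: "wsum g (y # zs) \<le> int (length zs) * M" using 1 by simp
  show ?case using a b by (simp add: algebra_simps)
qed auto

lemma succ_join: "successively A (xs @ [y]) \<Longrightarrow> successively A (y # ys) \<Longrightarrow> successively A (xs @ y # ys)"
  by (induction xs) (auto simp: successively_Cons hd_append)


lemma wsum_hom:
  assumes "\<And>x y. f (x + y) = f x + f y" "f 0 = 0"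
  shows "wsum (\<lambda>a b. f (g a b)) xs = f (wsum g xs)"
  by (induction g xs rule: wsum.induct) (auto simp: assms)

definition cw :: "('a \<Rightarrow> 'a \<Rightarrow> bool) \<Rightarrow> 'a list \<Rightarrow> bool" where
  "cw A xs \<longleftrightarrow> length xs \<ge> 2 \<and> hd xs = last xs \<and> successively A xs"

lemma distinct_len:
  fixes xs :: "'a::finite list"
  assumes "distinct xs" shows "length xs \<le> card (UNIV::'a set)"
  using assms distinct_card[of xs] card_mono[of UNIV "set xs"] by simp

lemma cw_short:
  fixes g :: "'a::finite \<Rightarrow> 'a \<Rightarrow> int"
  assumes short: "\<And>ys. cw A ys \<Longrightarrow> length ys \<le> card (UNIV::'a set) + 1 \<Longrightarrow> wsum g ys \<le> 0"
  shows "cw A xs \<Longrightarrow> wsum g xs \<le> 0"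
proof (induction "length xs" arbitrary: xs rule: less_induct)
  case less
  show ?case
  proof (cases "length xs \<le> card (UNIV::'a set) + 1")
    case True then show ?thesis using short less.prems by blast
  next
    case False
    then have "\<not> distinct (butlast xs)" using distinct_len[of "butlast xs"] by auto
    then obtain as y bs cs where d: "butlast xs = as @ [y] @ bs @ [y] @ cs"
      using not_distinct_decomp by blast
    define x0 where "x0 = last xs"
    have xs: "xs = as @ [y] @ bs @ [y] @ cs @ [x0]"
      using d less.prems unfolding cw_def x0_def
      by (metis append.assoc append_Cons append_butlast_last_id list.size(3) not_numeral_le_zero)
    have hx: "hd xs = x0" using less.prems unfolding cw_def x0_def by simp
    have s: "successively A xs" using less.prems unfolding cw_def by simp
    have "successively A (as @ ((y # bs @ [y]) @ (cs @ [x0])))"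
      using s xs by simp
    then have c1: "cw A (y # bs @ [y])"
      unfolding cw_def by (simp only: successively_append_iff) simp
    have "successively A ((as @ [y]) @ (bs @ (y # cs @ [x0])))" using s xs by simp
    then have "successively A (as @ [y])" "successively A (y # cs @ [x0])"
      by (simp_all only: successively_append_iff)
    then have "successively A (as @ y # cs @ [x0])" by (rule succ_join)
    then have c2: "cw A (as @ [y] @ cs @ [x0])"
      using hx unfolding xs cw_def by (cases as) auto
    have e1: "wsum g xs = wsum g (as @ [y]) + wsum g (y # bs @ [y]) + wsum g (y # cs @ [x0])"
      unfolding xs using wsum_append[of g as y "bs @ [y] @ cs @ [x0]"]
        wsum_append[of g "y # bs" y "cs @ [x0]"] by (simp add: add.assoc)
    have e2: "wsum g (as @ [y] @ cs @ [x0]) = wsum g (as @ [y]) + wsum g (y # cs @ [x0])"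
      using wsum_append[of g as y "cs @ [x0]"] by simp
    have "wsum g (y # bs @ [y]) \<le> 0" using less.hyps[OF _ c1] xs by simp
    moreover have "wsum g (as @ [y] @ cs @ [x0]) \<le> 0" using less.hyps[OF _ c2] xs by simp
    ultimately show ?thesis using e1 e2 by simp
  qed
qed

lemma succ_split: "successively A (xs @ y # ys) \<Longrightarrow> successively A (xs @ [y]) \<and> successively A (y # ys)"
  by (induction xs) (auto simp: successively_Cons hd_append)

lemma bound_path:
  fixes g :: "'a::finite \<Rightarrow> 'a \<Rightarrow> int"
  assumes cyc: "\<And>ys. cw A ys \<Longrightarrow> wsum g ys \<le> 0" and M: "\<And>a b. g a b \<le> M" "0 \<le> M"
  shows "successively A xs \<Longrightarrow> wsum g xs \<le> int (card (UNIV::'a set)) * M"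
proof (induction "length xs" arbitrary: xs rule: less_induct)
  case less
  show ?case
  proof (cases "distinct xs")
    case True
    then have "length xs \<le> card (UNIV::'a set)" by (rule distinct_len)
    then have "int (length xs - 1) * M \<le> int (card (UNIV::'a set)) * M" using M by (intro mult_right_mono) auto
    moreover have "wsum g xs \<le> int (length xs - 1) * M" using wsum_le[of g M xs] M by blast
    ultimately show ?thesis by linarith
  next
    case False
    then obtain as y bs cs where xs: "xs = as @ [y] @ bs @ [y] @ cs" using not_distinct_decomp by blast
    have "successively A (as @ y # (bs @ y # cs))" using less.prems xs by simp
    then have p1: "successively A (as @ [y])" and q: "successively A (y # bs @ y # cs)"
      using succ_split[of A as y "bs @ y # cs"] by blast+
    have "successively A ((y # bs) @ y # cs)" using q by simp
    then have p2: "successively A (y # bs @ [y])" and p3: "successively A (y # cs)"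
      using succ_split[of A "y # bs" y cs] by auto
    have c: "cw A (y # bs @ [y])" using p2 unfolding cw_def by simp
    have e1: "wsum g xs = wsum g (as @ [y]) + wsum g (y # bs @ [y]) + wsum g (y # cs)"
      unfolding xs using wsum_append[of g as y "bs @ [y] @ cs"]
        wsum_append[of g "y # bs" y "cs"] by (simp add: add.assoc)
    have e2: "wsum g (as @ y # cs) = wsum g (as @ [y]) + wsum g (y # cs)"
      using wsum_append[of g as y "cs"] by simp
    have "successively A (as @ y # cs)" using p1 p3 by (rule succ_join)
    then have "wsum g (as @ y # cs) \<le> int (card (UNIV::'a set)) * M"
      using less.hyps[of "as @ y # cs"] xs by simp
    then show ?thesis using e1 e2 cyc[OF c] by simp
  qed
qed

lemma shift_pow: "(shift ^^ i) s = (\<lambda>k. s (k + int i))"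
proof (induction i)
  case (Suc i)
  then show ?case by (auto simp: shift_def algebra_simps)
qed simp

lemma hsum_eq: "hsum H s n = (\<Sum>i<n. H (s (int i)) (s (int i + 1)))"
  unfolding hsum_def height_def shift_pow by (simp add: add.commute)

lemma hsum_wsum: "hsum H s n = wsum H (map (\<lambda>i. s (int i)) [0..<Suc n])"
  unfolding hsum_eq wsum_nth
  by (intro sum.cong) (auto simp del: upt_Suc simp: nth_append add.commute)

lemma successively_nth: "successively P xs \<longleftrightarrow> (\<forall>i. Suc i < length xs \<longrightarrow> P (xs!i) (xs!Suc i))"
proof (induction P xs rule: successively.induct)
  case (3 P x y xs)
  show ?case
  proof
    assume "successively P (x # y # xs)"
    then show "\<forall>i. Suc i < length (x # y # xs) \<longrightarrow> P ((x # y # xs) ! i) ((x # y # xs) ! Suc i)"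
      using 3 by (auto simp: nth_Cons split: nat.splits)
  next
    assume a: "\<forall>i. Suc i < length (x # y # xs) \<longrightarrow> P ((x # y # xs) ! i) ((x # y # xs) ! Suc i)"
    then have "P x y" by (metis length_Cons nth_Cons_0 nth_Cons_Suc zero_less_Suc Suc_less_eq)
    moreover have "\<forall>i. Suc i < length (y # xs) \<longrightarrow> P ((y # xs) ! i) ((y # xs) ! Suc i)"
      using a by (metis length_Cons nth_Cons_Suc Suc_less_eq)
    ultimately show "successively P (x # y # xs)" using 3 by simp
  qed
qed auto

lemma sft_succ: "s \<in> sft A \<Longrightarrow> successively A (map (\<lambda>i. s (int i)) [0..<Suc n])"
  unfolding successively_nth sft_def
  by (auto simp del: upt_Suc simp: add.commute)

lemma ivr_add: "int_vec_to_real (x + y) = int_vec_to_real x + int_vec_to_real y"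
  by (simp add: int_vec_to_real_def vec_eq_iff)

lemma ivr_zero: "int_vec_to_real 0 = 0"
  by (simp add: int_vec_to_real_def vec_eq_iff)

lemma ivr_sum: "int_vec_to_real (\<Sum>i\<in>S. f i) = (\<Sum>i\<in>S. int_vec_to_real (f i))"
proof (induction S rule: infinite_finite_induct)
  case (insert x F) then show ?case by (simp add: ivr_add)
qed (auto simp: ivr_zero)

lemma conv_lemma:
  fixes X :: "nat \<Rightarrow> real ^ 'd"
  assumes K: "K \<ge> 0" and b: "\<And>n. norm (X n - real n *\<^sub>R v) \<le> sqrt (K * real n) + B"
  shows "(\<lambda>n. (1 / real n) *\<^sub>R X n) \<longlonglongrightarrow> v"
proof -
  have l1: "(\<lambda>n. 1 / sqrt (real n)) \<longlonglongrightarrow> 0" by real_asymp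
  have l2: "(\<lambda>n. 1 / real n) \<longlonglongrightarrow> 0" by real_asymp
  have "(\<lambda>n. sqrt K * (1 / sqrt (real n)) + B * (1 / real n)) \<longlonglongrightarrow> 0"
    using tendsto_add[OF tendsto_mult_right_zero[OF l1, of "sqrt K"] tendsto_mult_right_zero[OF l2, of B]]
    by simp
  then have lim: "(\<lambda>n. sqrt K / sqrt (real n) + B / real n) \<longlonglongrightarrow> 0" by simp
  have ev: "eventually (\<lambda>n. norm ((1 / real n) *\<^sub>R X n - v) \<le> sqrt K / sqrt (real n) + B / real n) sequentially"
    using eventually_gt_at_top[of 0]
  proof eventually_elim
    case (elim n)
    then have "(1 / real n) *\<^sub>R X n - v = (1 / real n) *\<^sub>R (X n - real n *\<^sub>R v)"
      by (simp add: algebra_simps)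
    then have "norm ((1 / real n) *\<^sub>R X n - v) = norm (X n - real n *\<^sub>R v) / real n"
      by simp
    also have "\<dots> \<le> (sqrt (K * real n) + B) / real n"
      using b[of n] elim by (intro divide_right_mono) auto
    also have "\<dots> = sqrt K / sqrt (real n) + B / real n"
    proof -
      have sn: "sqrt (real n) * sqrt (real n) = real n" by simp
      have "sqrt (real n) > 0" using elim by simp
      then have a: "sqrt K * sqrt (real n) / (sqrt (real n) * sqrt (real n)) = sqrt K / sqrt (real n)"
        by (intro nonzero_mult_divide_mult_cancel_right) simp
      have b: "sqrt (K * real n) / real n = sqrt K * sqrt (real n) / (sqrt (real n) * sqrt (real n))"
        by (simp only: real_sqrt_mult sn)
      show ?thesis by (simp only: add_divide_distrib a b)
    qed
    finally show ?case .
  qed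
  show ?thesis unfolding Lim_null[of _ v] by (rule Lim_null_comparison[OF ev lim])
qed

lemma sum_period:
  fixes F :: "nat \<Rightarrow> 'b::comm_monoid_add"
  assumes "\<And>i. F (i + l) = F i"
  shows "(\<Sum>i<n + l. F i) = (\<Sum>i<n. F i) + (\<Sum>i<l. F i)"
proof (induction n)
  case (Suc n)
  have "(\<Sum>i<Suc n + l. F i) = (\<Sum>i<n + l. F i) + F (n + l)" by simp
  moreover have "F (n + l) = F n" by (rule assms)
  ultimately show ?case using Suc by (simp add: add_ac)
qed simp



lemma periodic_sum_bound:
  fixes F :: "nat \<Rightarrow> real ^ 'd"
  assumes per: "\<And>i. F (i + l) = F i" and l: "l > 0"
  shows "norm ((\<Sum>i<n. F i) - (real n / real l) *\<^sub>R (\<Sum>i<l. F i)) \<le> (\<Sum>i<l. norm (F i)) + norm (\<Sum>i<l. F i)"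
proof -
  define S where "S = (\<Sum>i<l. F i)"
  have q: "(\<Sum>i<q * l + r. F i) = real q *\<^sub>R S + (\<Sum>i<r. F i)" for q r
  proof (induction q)
    case (Suc q)
    have "(\<Sum>i<Suc q * l + r. F i) = (\<Sum>i<(q * l + r) + l. F i)" by (simp add: add_ac)
    also have "\<dots> = (\<Sum>i<q * l + r. F i) + S" unfolding S_def by (rule sum_period[of F l, OF per])
    finally show ?case using Suc by (simp add: algebra_simps)
  qed simp
  define q r where "q = n div l" and "r = n mod l"
  have n: "n = q * l + r" unfolding q_def r_def by simp
  have rl: "r < l" unfolding r_def using l by simp
  have "real n / real l = real q + real r / real l" using l unfolding n by (simp add: field_simps)
  then have "(\<Sum>i<n. F i) - (real n / real l) *\<^sub>R S = (\<Sum>i<r. F i) - (real r / real l) *\<^sub>R S"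
    using q[of q r] n by (simp add: algebra_simps)
  also have "norm \<dots> \<le> norm (\<Sum>i<r. F i) + norm ((real r / real l) *\<^sub>R S)" by (rule norm_triangle_ineq4)
  also have "norm (\<Sum>i<r. F i) \<le> (\<Sum>i<r. norm (F i))" by (rule norm_sum)
  also have "\<dots> \<le> (\<Sum>i<l. norm (F i))" using rl by (intro sum_mono2) auto
  also have "norm ((real r / real l) *\<^sub>R S) \<le> norm S"
  proof -
    have "real r / real l \<le> 1" "0 \<le> real r / real l" using rl by auto
    moreover have e: "norm ((real r / real l) *\<^sub>R S) = (real r / real l) * norm S"
      using \<open>0 \<le> real r / real l\<close> by (simp only: norm_scaleR abs_of_nonneg)
    ultimately show ?thesis by (simp only: e) (rule mult_left_le_one_le, auto)
  qed
  finally show ?thesis unfolding S_def by simp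
qed

definition per :: "'a list \<Rightarrow> int \<Rightarrow> 'a" where
  "per xs i = xs ! nat (i mod int (length xs - 1))"

lemma per_step:
  assumes "cw A xs"
  shows "per xs (i + 1) = (if nat (i mod int (length xs - 1)) + 1 < length xs - 1
           then xs ! (nat (i mod int (length xs - 1)) + 1) else xs ! 0)"
proof -
  define l where "l = int (length xs - 1)"
  have l: "l > 0" using assms unfolding cw_def l_def by simp
  define k where "k = i mod l"
  have k: "0 \<le> k" "k < l" unfolding k_def using l by auto
  have "(i + 1) mod l = (k + 1) mod l" unfolding k_def by (simp add: mod_add_left_eq)
  also have "\<dots> = (if k + 1 < l then k + 1 else 0)"
  proof (cases "k + 1 < l")
    case False
    then have "k + 1 = l" using k by simp
    then show ?thesis by simp
  qed (use k in auto)
  finally have e: "(i + 1) mod l = (if k + 1 < l then k + 1 else 0)" .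
  have "nat k + 1 < length xs - 1 \<longleftrightarrow> k + 1 < l" using k unfolding l_def by linarith
  then show ?thesis unfolding per_def l_def[symmetric] k_def[symmetric] e using k
    by (auto simp: nat_add_distrib)
qed

lemma cw_first_last:
  assumes "cw A xs" shows "xs ! 0 = xs ! (length xs - 1)"
proof -
  have ne: "xs \<noteq> []" using assms unfolding cw_def by auto
  have "xs ! 0 = hd xs" by (rule hd_conv_nth[OF ne, symmetric])
  also have "\<dots> = last xs" using assms unfolding cw_def by simp
  also have "\<dots> = xs ! (length xs - 1)" by (rule last_conv_nth[OF ne])
  finally show ?thesis .
qed

lemma per_nth:
  assumes "cw A xs" "j \<le> length xs - 1"
  shows "per xs (int j) = xs ! j"
proof (cases "j < length xs - 1")
  case True
  then show ?thesis unfolding per_def by simp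
next
  case False
  then have j: "j = length xs - 1" using assms by simp
  have "per xs (int j) = xs ! 0" unfolding per_def j by simp
  also have "\<dots> = xs ! j" using cw_first_last[OF assms(1)] j by simp
  finally show ?thesis .
qed

lemma per_range:
  assumes "cw A xs"
  shows "per xs i = xs ! nat (i mod int (length xs - 1))" "nat (i mod int (length xs - 1)) < length xs - 1"
proof -
  have l: "int (length xs - 1) > 0" using assms unfolding cw_def by simp
  show "per xs i = xs ! nat (i mod int (length xs - 1))" unfolding per_def ..
  show "nat (i mod int (length xs - 1)) < length xs - 1" using l
    by (metis nat_less_iff pos_mod_bound pos_mod_sign)
qed

lemma per_sft:
  assumes c: "cw A xs"
  shows "per xs \<in> sft A"
  unfolding sft_def
proof (intro CollectI allI)
  fix i
  define k where "k = nat (i mod int (length xs - 1))"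
  have k1: "k < length xs - 1" using per_range(2)[OF c, of i] unfolding k_def .
  have k2: "per xs i = xs ! k" using per_range(1)[OF c, of i] unfolding k_def .
  note k = k1 k2
  have s: "successively A xs" using c unfolding cw_def by simp
  have st: "A (xs ! k) (xs ! Suc k)" using s k(1) unfolding successively_nth by auto
  show "A (per xs i) (per xs (i + 1))"
  proof (cases "k + 1 < length xs - 1")
    case True
    then show ?thesis using per_step[OF c, of i] k st unfolding k_def[symmetric] by simp
  next
    case False
    then have "per xs (i + 1) = xs ! 0" using per_step[OF c, of i] unfolding k_def[symmetric] by simp
    also have "\<dots> = xs ! Suc k"
    proof -
      have "Suc k = length xs - 1" using False k by linarith
      then show ?thesis using cw_first_last[OF c] by simp
    qed
    finally show ?thesis using st k by simp
  qed
qed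

lemma per_shift:
  assumes c: "cw A xs"
  shows "per xs (k + int (length xs - 1)) = per xs k"
  unfolding per_def by simp

lemma per_periodic:
  assumes c: "cw A xs"
  shows "periodic_pt (per xs) (length xs - 1)"
  unfolding periodic_pt_def shift_pow using c per_shift[OF c] by (auto simp: cw_def)

lemma per_rot:
  assumes c: "cw A xs"
  shows "has_rot H (per xs) ((1 / real (length xs - 1)) *\<^sub>R int_vec_to_real (wsum H xs))"
proof -
  define l where "l = length xs - 1"
  have l: "l > 0" using c unfolding cw_def l_def by simp
  define F where "F i = int_vec_to_real (H (per xs (int i)) (per xs (int i + 1)))" for i
  have per: "F (i + l) = F i" for i
    unfolding F_def l_def using per_shift[OF c, of "int i"] per_shift[OF c, of "int i + 1"]
    by (simp add: algebra_simps)
  have S: "(\<Sum>i<l. F i) = int_vec_to_real (wsum H xs)"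
    unfolding wsum_nth ivr_sum F_def l_def[symmetric]
  proof (intro sum.cong refl)
    fix i assume "i \<in> {..<l}"
    then have "i \<le> l" "Suc i \<le> l" by auto
    then show "int_vec_to_real (H (per xs (int i)) (per xs (int i + 1))) = int_vec_to_real (H (xs ! i) (xs ! Suc i))"
      using per_nth[OF c, of i] per_nth[OF c, of "Suc i"] unfolding l_def by (simp add: add.commute)
  qed
  have X: "int_vec_to_real (hsum H (per xs) n) = (\<Sum>i<n. F i)" for n
    unfolding hsum_eq ivr_sum F_def ..
  define B where "B = (\<Sum>i<l. norm (F i)) + norm (\<Sum>i<l. F i)"
  have "norm (int_vec_to_real (hsum H (per xs) n) - real n *\<^sub>R ((1 / real l) *\<^sub>R int_vec_to_real (wsum H xs)))
        \<le> sqrt (0 * real n) + B" for n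
    using periodic_sum_bound[of F l n, OF per l] unfolding X B_def S by simp
  then show ?thesis unfolding has_rot_def l_def[symmetric] by (intro conv_lemma[of 0]) auto
qed

lemma hom_zero:
  fixes L :: "'a::monoid_add \<Rightarrow> int"
  shows "(\<And>x y. L (x + y) = L x + L y) \<Longrightarrow> L 0 = 0"
proof -
  assume a: "\<And>x y. L (x + y) = L x + L y"
  have "L 0 = L (0 + 0)" by simp
  also have "\<dots> = L 0 + L 0" by (rule a)
  finally show ?thesis by simp
qed

lemma hom_repr:
  fixes L :: "int ^ 'd \<Rightarrow> int"
  assumes add: "\<And>x y. L (x + y) = L x + L y"
  shows "L x = (\<Sum>i\<in>UNIV. x $ i * L (axis i 1))"
proof -
  have z: "L 0 = 0" using hom_zero add by blast
  have hs: "L (\<Sum>i\<in>S. f i) = (\<Sum>i\<in>S. L (f i))" for S and f :: "'d \<Rightarrow> int ^ 'd"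
  proof (induction S rule: infinite_finite_induct)
    case (insert x F)
    then show ?case by (simp add: add)
  qed (simp_all add: z)
  have ax: "L (axis i k) = k * L (axis i 1)" for i k
  proof (induction k rule: int_induct[where k=0])
    case base then show ?case using z by (simp add: axis_def zero_vec_def)
  next
    case (step1 j)
    have "axis i (j + 1) = axis i j + axis i 1" by (simp add: axis_def vec_eq_iff)
    then show ?case using step1 add by (simp add: algebra_simps)
  next
    case (step2 j)
    have "axis i j = axis i (j - 1) + axis i 1" by (simp add: axis_def vec_eq_iff)
    then show ?case using step2 add[of "axis i (j - 1)" "axis i 1"] by (simp add: algebra_simps)
  qed
  have "(\<Sum>i\<in>UNIV. axis i (x $ i)) $ j = x $ j" for j
    unfolding sum_component axis_def by (simp add: sum.delta')
  then have "x = (\<Sum>i\<in>UNIV. axis i (x $ i))" by (simp add: vec_eq_iff)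
  then have "L x = L (\<Sum>i\<in>UNIV. axis i (x $ i))" by (rule arg_cong)
  also have "\<dots> = (\<Sum>i\<in>UNIV. L (axis i (x $ i)))" by (rule hs)
  also have "\<dots> = (\<Sum>i\<in>UNIV. x $ i * L (axis i 1))" by (rule sum.cong[OF refl ax])
  finally show ?thesis .
qed

lemma lin_ext_ivr:
  fixes L :: "int ^ 'd \<Rightarrow> int"
  assumes add: "\<And>x y. L (x + y) = L x + L y"
  shows "lin_ext L (int_vec_to_real x) = real_of_int (L x)"
  unfolding lin_ext_def int_vec_to_real_def hom_repr[OF add, of x]
  by (simp add: mult.commute)

lemma lin_ext_scale: "lin_ext L (c *\<^sub>R v) = c * lin_ext L v"
  unfolding lin_ext_def by (simp add: sum_distrib_left algebra_simps)

definition pth :: "(int \<Rightarrow> 'a) \<Rightarrow> nat \<Rightarrow> 'a list" where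
  "pth s n = map (\<lambda>i. s (int i)) [0..<Suc n]"

lemma cyc_exists:
  fixes g :: "'a::finite \<Rightarrow> 'a \<Rightarrow> int"
  assumes M: "\<And>a b. g a b \<le> M" "0 \<le> M" and s: "s \<in> sft A"
    and big: "wsum g (pth s n) > int (card (UNIV::'a set)) * M"
  shows "\<exists>xs. cw A xs \<and> wsum g xs > 0"
proof (rule ccontr)
  assume "\<not> ?thesis"
  then have "\<And>ys. cw A ys \<Longrightarrow> wsum g ys \<le> 0" by force
  from bound_path[of A g M, OF this M sft_succ[OF s, of n]] big show False
    unfolding pth_def by simp
qed

lemma L_hsum:
  fixes L :: "int ^ 'd \<Rightarrow> int"
  assumes add: "\<And>x y. L (x + y) = L x + L y"
  shows "L (hsum H s n) = wsum (\<lambda>a b. L (H a b)) (pth s n)"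
  unfolding hsum_wsum pth_def using wsum_hom[of L H] hom_zero[of L] add by metis

lemma per_lin:
  fixes L :: "int ^ 'd \<Rightarrow> int"
  assumes add: "\<And>x y. L (x + y) = L x + L y" and c: "cw A xs"
  shows "lin_ext L ((1 / real (length xs - 1)) *\<^sub>R int_vec_to_real (wsum H xs))
       = real_of_int (wsum (\<lambda>a b. L (H a b)) xs) / real (length xs - 1)"
  unfolding lin_ext_scale lin_ext_ivr[of L, OF add] using wsum_hom[of L H xs] hom_zero[of L] add
  by simp

lemma part1:
  fixes A :: "'a::finite \<Rightarrow> 'a \<Rightarrow> bool" and H :: "'a \<Rightarrow> 'a \<Rightarrow> int ^ 'd"
    and L :: "int ^ 'd \<Rightarrow> int"
  assumes add: "\<And>x y. L (x + y) = L x + L y"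
  shows "\<exists>C :: real. C > 0 \<and>
              ((\<exists>s \<in> sft A. \<exists>n > 0. real_of_int (L (hsum H s n)) > C) \<longrightarrow>
                 (\<exists>s' \<in> sft A. \<exists>n'. periodic_pt s' n' \<and>
                    (\<exists>v. has_rot H s' v \<and> lin_ext L v > 0))) \<and>
              ((\<exists>s \<in> sft A. \<exists>n > 0. real_of_int (L (hsum H s n)) < - C) \<longrightarrow>
                 (\<exists>s'' \<in> sft A. \<exists>v. has_rot H s'' v \<and> lin_ext L v < 0))"
proof -
  define g where "g a b = L (H a b)" for a b
  define M where "M = (\<Sum>a\<in>UNIV. \<Sum>b\<in>UNIV. \<bar>g a b\<bar>)"
  have Mb: "\<bar>g a b\<bar> \<le> M" for a b
  proof -
    have "\<bar>g a b\<bar> \<le> (\<Sum>b\<in>UNIV. \<bar>g a b\<bar>)" by (rule member_le_sum) auto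
    also have "\<dots> \<le> M" unfolding M_def by (rule member_le_sum[of a]) (auto intro: sum_nonneg)
    finally show ?thesis .
  qed
  have M0: "0 \<le> M" unfolding M_def by (auto intro: sum_nonneg)
  have g1: "g a b \<le> M" for a b using Mb[of a b] by simp
  have g2: "- g a b \<le> M" for a b using Mb[of a b] by simp
  define N where "N = int (card (UNIV::'a set))"
  define C where "C = real_of_int (N * M + 1)"
  have Cpos: "C > 0" unfolding C_def N_def using M0 by (simp add: add_nonneg_pos)
  have per_pt: "\<exists>v. has_rot H (per xs) v \<and> lin_ext L v = real_of_int (wsum g xs) / real (length xs - 1)"
    if c: "cw A xs" for xs
    using per_rot[OF c, of H] per_lin[OF add c, of H] unfolding g_def by blast
  have l0: "real (length xs - 1) > 0" if "cw A xs" for xs using that unfolding cw_def by simp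
  have P1: "\<exists>s' \<in> sft A. \<exists>n'. periodic_pt s' n' \<and> (\<exists>v. has_rot H s' v \<and> lin_ext L v > 0)"
    if sA: "s \<in> sft A" and big: "real_of_int (L (hsum H s n)) > C" for s n
  proof -
    have "real_of_int (N * M + 1) < real_of_int (wsum g (pth s n))"
      using big unfolding C_def L_hsum[OF add] g_def[symmetric] by simp
    then have "N * M + 1 < wsum g (pth s n)" by (simp only: of_int_less_iff)
    then have "wsum g (pth s n) > N * M" by simp
    then obtain xs where c: "cw A xs" and p: "wsum g xs > 0"
      using cyc_exists[of g M, OF g1 M0 sA] unfolding N_def by blast
    obtain v where v: "has_rot H (per xs) v" "lin_ext L v = real_of_int (wsum g xs) / real (length xs - 1)"
      using per_pt[OF c] by blast
    have "lin_ext L v > 0" unfolding v(2) using p l0[OF c] by simp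
    then show ?thesis using per_sft[OF c] per_periodic[OF c] v(1) by blast
  qed
  have P2: "\<exists>s'' \<in> sft A. \<exists>v. has_rot H s'' v \<and> lin_ext L v < 0"
    if sA: "s \<in> sft A" and big: "real_of_int (L (hsum H s n)) < - C" for s n
  proof -
    have neg: "wsum (\<lambda>a b. - g a b) ys = - wsum g ys" for ys
      using wsum_hom[of uminus g ys] by simp
    have "real_of_int (wsum g (pth s n)) < real_of_int (- (N * M + 1))"
      using big unfolding C_def L_hsum[OF add] g_def[symmetric] by simp
    then have "wsum g (pth s n) < - (N * M + 1)" by (simp only: of_int_less_iff)
    then have "wsum (\<lambda>a b. - g a b) (pth s n) > N * M" unfolding neg by simp
    then obtain xs where c: "cw A xs" and p: "wsum (\<lambda>a b. - g a b) xs > 0"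
      using cyc_exists[of "\<lambda>a b. - g a b" M, OF g2 M0 sA] unfolding N_def by blast
    obtain v where v: "has_rot H (per xs) v" "lin_ext L v = real_of_int (wsum g xs) / real (length xs - 1)"
      using per_pt[OF c] by blast
    have "lin_ext L v < 0" unfolding v(2) using p l0[OF c] neg[of xs] by (simp add: divide_neg_pos)
    then show ?thesis using per_sft[OF c] v(1) by blast
  qed
  show ?thesis using Cpos P1 P2 by blast
qed

primrec Ew :: "('l \<Rightarrow> real ^ 'd) \<Rightarrow> (real ^ 'd \<Rightarrow> 'l) \<Rightarrow> nat \<Rightarrow> real ^ 'd" where
  "Ew z ch 0 = 0"
| "Ew z ch (Suc t) = Ew z ch t + z (ch (Ew z ch t))"

primrec pos :: "(nat \<Rightarrow> nat) \<Rightarrow> nat \<Rightarrow> nat \<times> nat" where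
  "pos lj 0 = (0, 0)"
| "pos lj (Suc n) = (if Suc (snd (pos lj n)) < lj (fst (pos lj n)) then (fst (pos lj n), Suc (snd (pos lj n)))
                     else (Suc (fst (pos lj n)), 0))"

lemma pos_inv:
  assumes "\<And>t. lj t \<ge> 1"
  shows "snd (pos lj n) < lj (fst (pos lj n)) \<and> n = (\<Sum>u<fst (pos lj n). lj u) + snd (pos lj n)"
proof (induction n)
  case 0 then show ?case using assms[of 0] by simp
next
  case (Suc n)
  then show ?case using assms[of "Suc (fst (pos lj n))"] by (auto simp: Let_def)
qed

lemma pos_fst_le:
  assumes "\<And>t. lj t \<ge> 1"
  shows "fst (pos lj n) \<le> n"
proof -
  have "fst (pos lj n) = (\<Sum>u<fst (pos lj n). 1)" by simp
  also have "\<dots> \<le> (\<Sum>u<fst (pos lj n). lj u)" by (intro sum_mono assms)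
  also have "\<dots> \<le> n" using pos_inv[of lj n, OF assms] by linarith
  finally show ?thesis .
qed

lemma wsum_take_Suc:
  assumes "Suc r < length w"
  shows "wsum g (take (Suc (Suc r)) w) = wsum g (take (Suc r) w) + g (w ! r) (w ! Suc r)"
proof -
  have "take (Suc (Suc r)) w = take r w @ [w ! r, w ! Suc r]"
    using assms by (simp add: take_Suc_conv_app_nth)
  moreover have "take (Suc r) w = take r w @ [w ! r]"
    using assms by (simp add: take_Suc_conv_app_nth)
  ultimately show ?thesis using wsum_snoc by metis
qed

lemma Ew_bound:
  fixes z :: "'l \<Rightarrow> real ^ 'd"
  assumes ch: "\<And>e. e \<bullet> z (ch e) \<le> 0" and K: "\<And>e. norm (z (ch e)) ^ 2 \<le> K"
  shows "norm (Ew z ch t) ^ 2 \<le> K * real t"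
proof (induction t)
  case (Suc t)
  let ?e = "Ew z ch t"
  have "norm (?e + z (ch ?e)) ^ 2 = norm ?e ^ 2 + 2 * (?e \<bullet> z (ch ?e)) + norm (z (ch ?e)) ^ 2"
    by (simp add: power2_norm_eq_inner inner_add algebra_simps inner_commute)
  also have "\<dots> \<le> K * real t + K" using Suc ch[of ?e] K[of ?e] by linarith
  finally show ?case by (simp add: algebra_simps)
qed simp

lemma wsum_norm_le:
  fixes g :: "'a \<Rightarrow> 'a \<Rightarrow> real ^ 'd"
  assumes "\<And>a b. norm (g a b) \<le> M"
  shows "norm (wsum g xs) \<le> real (length xs - 1) * M"
  using assms
proof (induction g xs rule: wsum.induct)
  case (1 g x y zs)
  have a: "norm (g x y) \<le> M" using 1 by simp
  have b: "norm (wsum g (y # zs)) \<le> real (length zs) * M" using 1 by simp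
  have "norm (wsum g (x # y # zs)) \<le> norm (g x y) + norm (wsum g (y # zs))"
    by (simp add: norm_triangle_ineq)
  then show ?case using a b by (simp add: algebra_simps)
qed auto

lemma greedy:
  fixes A :: "'a::finite \<Rightarrow> 'a \<Rightarrow> bool" and H :: "'a \<Rightarrow> 'a \<Rightarrow> int ^ 'd" and F :: "'a list set"
    and v :: "real ^ 'd"
  assumes fin: "finite F" and loops: "\<And>ys. ys \<in> F \<Longrightarrow> cw A ys \<and> hd ys = q0"
    and dir: "\<And>e. \<exists>ys\<in>F. e \<bullet> (wsum (\<lambda>a b. int_vec_to_real (H a b)) ys - real (length ys - 1) *\<^sub>R v) \<le> 0"
  shows "\<exists>s\<in>sft A. has_rot H s v"
proof -
  define Hr where "Hr a b = int_vec_to_real (H a b)" for a b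
  define z where "z ys = wsum Hr ys - real (length ys - 1) *\<^sub>R v" for ys
  define ch where "ch e = (SOME ys. ys \<in> F \<and> e \<bullet> z ys \<le> 0)" for e
  have ch: "ch e \<in> F \<and> e \<bullet> z (ch e) \<le> 0" for e
    unfolding ch_def by (rule someI_ex) (use dir[of e] in \<open>auto simp: z_def Hr_def[abs_def]\<close>)
  define K where "K = (\<Sum>ys\<in>F. norm (z ys) ^ 2)"
  have K: "norm (z (ch e)) ^ 2 \<le> K" for e
    unfolding K_def using ch[of e] fin by (intro member_le_sum) auto
  have K0: "K \<ge> 0" unfolding K_def by (auto intro: sum_nonneg)
  define J where "J t = ch (Ew z ch t)" for t
  define lj where "lj t = length (J t) - 1" for t
  have J: "J t \<in> F" for t unfolding J_def using ch by blast
  have cwJ: "cw A (J t)" "hd (J t) = q0" for t using loops[OF J[of t]] by auto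
  have lj1: "lj t \<ge> 1" for t using cwJ(1)[of t] unfolding lj_def cw_def by (elim conjE) linarith
  have J0: "J t ! 0 = q0" for t
  proof -
    have "J t \<noteq> []" using cwJ(1)[of t] unfolding cw_def by auto
    then show ?thesis using cwJ(2)[of t] by (simp add: hd_conv_nth)
  qed
  have Jend: "J t ! Suc r = q0" if "\<not> Suc r < lj t" "r < lj t" for t r
  proof -
    have "Suc r = length (J t) - 1" using that unfolding lj_def by linarith
    then show ?thesis using cw_first_last[OF cwJ(1)[of t]] J0[of t] by simp
  qed
  define p where "p n = J (fst (pos lj n)) ! snd (pos lj n)" for n
  have p0: "p 0 = q0" unfolding p_def using J0 by simp
  have edge: "A (p n) (p (Suc n))" for n
  proof -
    obtain t r where tr: "pos lj n = (t, r)" by (cases "pos lj n")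
    have r: "r < lj t" using pos_inv[of lj n, OF lj1] tr by simp
    have s: "successively A (J t)" using cwJ(1)[of t] unfolding cw_def by simp
    have st: "A (J t ! r) (J t ! Suc r)" using s r unfolding successively_nth lj_def by auto
    show ?thesis
    proof (cases "Suc r < lj t")
      case True
      then show ?thesis using st unfolding p_def by (simp add: tr)
    next
      case False
      then have "p (Suc n) = q0" unfolding p_def using J0 by (simp add: tr)
      then show ?thesis using st Jend[OF False r] unfolding p_def by (simp add: tr)
    qed
  qed
  have sums: "(\<Sum>i<n. Hr (p i) (p (Suc i))) = (\<Sum>u<fst (pos lj n). wsum Hr (J u))
      + wsum Hr (take (Suc (snd (pos lj n))) (J (fst (pos lj n))))" for n
  proof (induction n)
    case 0
    have "J 0 \<noteq> []" using cwJ(1)[of 0] unfolding cw_def by auto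
    then show ?case by (cases "J 0") auto
  next
    case (Suc n)
    obtain t r where tr: "pos lj n = (t, r)" by (cases "pos lj n")
    have r: "r < lj t" using pos_inv[of lj n, OF lj1] tr by simp
    have len: "Suc r < length (J t)" using r lj1[of t] unfolding lj_def by linarith
    have ws: "wsum Hr (take (Suc (Suc r)) (J t)) = wsum Hr (take (Suc r) (J t)) + Hr (J t ! r) (J t ! Suc r)"
      by (rule wsum_take_Suc[OF len])
    have pn: "p n = J t ! r" unfolding p_def by (simp add: tr)
    show ?case
    proof (cases "Suc r < lj t")
      case True
      have "p (Suc n) = J t ! Suc r" unfolding p_def using True by (simp add: tr)
      then show ?thesis using Suc True ws pn by (simp add: tr)
    next
      case False
      have pS: "p (Suc n) = J t ! Suc r" using Jend[OF False r] unfolding p_def using J0 False by (simp add: tr)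
      have "Suc (Suc r) = length (J t)" using False r unfolding lj_def by linarith
      then have tk: "take (Suc (Suc r)) (J t) = J t" by simp
      have "J (Suc t) \<noteq> []" using cwJ(1)[of "Suc t"] unfolding cw_def by auto
      then have w1: "wsum Hr (take (Suc 0) (J (Suc t))) = 0" by (cases "J (Suc t)") auto
      show ?thesis using Suc False ws pn pS tk w1 by (simp add: tr add_ac)
    qed
  qed
  have Esum: "(\<Sum>u<t. z (J u)) = Ew z ch t" for t
    by (induction t) (auto simp: J_def)
  define w0 where "w0 = J 0"
  define s where "s i = (if 0 \<le> i then p (nat i) else per w0 i)" for i
  have per0: "per w0 0 = q0" unfolding per_def w0_def using J0 by simp
  have sA: "s \<in> sft A"
    unfolding sft_def
  proof (intro CollectI allI)
    fix i :: int
    have pe: "A (per w0 i) (per w0 (i + 1))" using per_sft[OF cwJ(1)[of 0]] unfolding w0_def sft_def by blast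
    show "A (s i) (s (i + 1))"
    proof (cases "0 \<le> i")
      case True
      then have "nat (i + 1) = Suc (nat i)" by simp
      then show ?thesis using True edge[of "nat i"] unfolding s_def by simp
    next
      case False
      show ?thesis
      proof (cases "i = -1")
        case True
        then show ?thesis using pe per0 p0 unfolding s_def by simp
      next
        case False2: False
        then show ?thesis using pe False unfolding s_def by simp
      qed
    qed
  qed
  define Mh where "Mh = (\<Sum>a\<in>UNIV. \<Sum>b\<in>UNIV. norm (Hr a b))"
  have Mh: "norm (Hr a b) \<le> Mh" for a b
  proof -
    have "norm (Hr a b) \<le> (\<Sum>b\<in>UNIV. norm (Hr a b))" by (rule member_le_sum) auto
    also have "\<dots> \<le> Mh" unfolding Mh_def by (rule member_le_sum[of a]) (auto intro: sum_nonneg)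
    finally show ?thesis .
  qed
  define Lm where "Lm = (\<Sum>ys\<in>F. length ys)"
  have ljL: "lj t \<le> Lm" for t unfolding lj_def Lm_def using J[of t] fin
    by (meson diff_le_self le_trans member_le_sum zero_le)
  define B where "B = real Lm * (Mh + norm v)"
  have bound: "norm (int_vec_to_real (hsum H s n) - real n *\<^sub>R v) \<le> sqrt (K * real n) + B" for n
  proof -
    obtain t r where tr: "pos lj n = (t, r)" by (cases "pos lj n")
    have r: "r < lj t" and n: "n = (\<Sum>u<t. lj u) + r" using pos_inv[of lj n, OF lj1] tr by auto
    have tn: "t \<le> n" using pos_fst_le[of lj n, OF lj1] tr by simp
    have X: "int_vec_to_real (hsum H s n) = (\<Sum>i<n. Hr (p i) (p (Suc i)))"
      unfolding hsum_eq ivr_sum Hr_def s_def by (simp add: nat_add_distrib)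
    define R where "R = wsum Hr (take (Suc r) (J t)) - real r *\<^sub>R v"
    have "(\<Sum>i<n. Hr (p i) (p (Suc i))) - real n *\<^sub>R v = (\<Sum>u<t. z (J u)) + R"
      unfolding sums tr R_def z_def lj_def[symmetric] fst_conv snd_conv
      by (simp add: n sum_subtractf scaleR_sum_left algebra_simps)
    then have eq: "int_vec_to_real (hsum H s n) - real n *\<^sub>R v = Ew z ch t + R" using Esum X by simp
    have "norm (Ew z ch t) \<le> sqrt (K * real t)"
      using Ew_bound[of z ch K t] ch K by (intro real_le_rsqrt) auto
    also have "\<dots> \<le> sqrt (K * real n)" using tn K0 by (intro real_sqrt_le_mono mult_left_mono) auto
    finally have e1: "norm (Ew z ch t) \<le> sqrt (K * real n)" .
    have lt: "length (take (Suc r) (J t)) - 1 = r" using r unfolding lj_def by simp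
    have "norm R \<le> norm (wsum Hr (take (Suc r) (J t))) + norm (real r *\<^sub>R v)"
      unfolding R_def by (rule norm_triangle_ineq4)
    also have "\<dots> \<le> real r * Mh + real r * norm v"
      using wsum_norm_le[of Hr Mh "take (Suc r) (J t)", OF Mh] lt by simp
    also have "\<dots> \<le> B"
    proof -
      have m0: "0 \<le> Mh + norm v" using Mh[of q0 q0] norm_ge_zero[of "Hr q0 q0"] norm_ge_zero[of v] by linarith
      have "real r \<le> real Lm" using r ljL[of t] by simp
      then have "real r * (Mh + norm v) \<le> real Lm * (Mh + norm v)" using m0 by (rule mult_right_mono)
      then show ?thesis unfolding B_def by (simp add: algebra_simps)
    qed
    finally have e2: "norm R \<le> B" .
    show ?thesis unfolding eq using e1 e2 norm_triangle_ineq[of "Ew z ch t" R] by linarith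
  qed
  have "has_rot H s v" unfolding has_rot_def by (rule conv_lemma[OF K0 bound])
  then show ?thesis using sA by blast
qed

lemma dir_sign:
  fixes E :: "real ^ 'd" and V :: "(int ^ 'd) set"
  assumes fin: "finite V" and E: "E \<noteq> 0" and neg: "\<And>x. x \<in> V \<Longrightarrow> E \<bullet> int_vec_to_real x \<le> 0"
  shows "\<exists>Lv :: int ^ 'd. Lv \<noteq> 0 \<and> (\<forall>x\<in>V. (\<Sum>i\<in>UNIV. Lv $ i * x $ i) \<le> 0)"
proof -
  have Eivr: "E \<bullet> int_vec_to_real x = (\<Sum>i\<in>UNIV. E$i * real_of_int (x$i))" for x
    by (simp add: inner_vec_def int_vec_to_real_def)
  obtain i0 where i0: "E $ i0 \<noteq> 0" using E by (auto simp: vec_eq_iff)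
  define W where "W = {-(E \<bullet> int_vec_to_real x) | x. x \<in> V \<and> E \<bullet> int_vec_to_real x < 0}"
  have finW: "finite W" unfolding W_def using fin by simp
  define \<eta> where "\<eta> = Min (insert 1 W)"
  have \<eta>: "\<eta> > 0" unfolding \<eta>_def using finW by (auto simp: W_def)
  have \<eta>1: "\<eta> \<le> 1" unfolding \<eta>_def using finW by simp
  have \<eta>le: "\<eta> \<le> -(E \<bullet> int_vec_to_real x)" if "x \<in> V" "E \<bullet> int_vec_to_real x < 0" for x
    unfolding \<eta>_def using finW that by (intro Min_le) (auto simp: W_def)
  define Mc where "Mc = (\<Sum>x\<in>V. \<Sum>i\<in>UNIV. \<bar>real_of_int (x$i)\<bar>)"
  have Mc: "(\<Sum>i\<in>UNIV. \<bar>real_of_int (x$i)\<bar>) \<le> Mc" if "x \<in> V" for x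
    unfolding Mc_def using fin that by (intro member_le_sum) (auto intro: sum_nonneg)
  have Mc0: "Mc \<ge> 0" unfolding Mc_def by (auto intro: sum_nonneg)
  obtain N :: nat where N: "real N > max ((Mc + 1) / \<eta>) (1 / \<bar>E$i0\<bar>)"
    using reals_Archimedean2 by blast
  have N1: "real N > (Mc + 1) / \<eta>" and N2: "real N > 1 / \<bar>E$i0\<bar>" using N by auto
  have Npos: "N > 0"
  proof -
    have "1 / \<bar>E$i0\<bar> > 0" using i0 by simp
    then have "real N > 0" using N2 by linarith
    then show ?thesis by simp
  qed
  have McN: "Mc / real N < \<eta>"
  proof -
    have "Mc + 1 < real N * \<eta>" using N1 \<eta> by (simp add: field_simps)
    then show ?thesis using Npos \<eta> by (simp add: field_simps)
  qed
  have EN: "1 / real N < \<bar>E$i0\<bar>"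
  proof -
    have "1 < real N * \<bar>E$i0\<bar>" using N2 i0 by (simp add: field_simps)
    then show ?thesis using Npos by (simp add: field_simps)
  qed
  obtain h where h: "bij_betw h {0..<CARD('d)} (UNIV::'d set)"
    using ex_bij_betw_nat_finite[of "UNIV::'d set"] by auto
  define \<theta> where "\<theta> k = E $ h k" for k
  obtain q p where q: "0 < q" and qp: "\<And>k. k < CARD('d) \<Longrightarrow> \<bar>of_int q * \<theta> k - of_int (p k)\<bar> < 1 / real N"
    using Dirichlet_approx_simult[where \<theta>=\<theta> and N=N and n="CARD('d)"] Npos by blast
  define Lv where "Lv = (\<chi> i. p (inv_into {0..<CARD('d)} h i))"
  have app: "\<bar>of_int q * E$i - of_int (Lv$i)\<bar> < 1 / real N" for i
  proof -
    define k where "k = inv_into {0..<CARD('d)} h i"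
    have k: "k \<in> {0..<CARD('d)}" unfolding k_def using h
      by (metis UNIV_I bij_betw_def inv_into_into)
    have hk: "h k = i" unfolding k_def using h by (simp add: bij_betw_inv_into_right)
    show ?thesis using qp[of k] k hk unfolding \<theta>_def Lv_def k_def by simp
  qed
  have Lv0: "Lv \<noteq> 0"
  proof
    assume "Lv = 0"
    then have "\<bar>of_int q * E$i0\<bar> < 1 / real N" using app[of i0] by simp
    moreover have "\<bar>E$i0\<bar> \<le> \<bar>of_int q * E$i0\<bar>" using q by (simp add: abs_mult mult_le_cancel_right1)
    ultimately show False using EN by linarith
  qed
  have "(\<Sum>i\<in>UNIV. Lv $ i * x $ i) \<le> 0" if x: "x \<in> V" for x
  proof -
    define a where "a = E \<bullet> int_vec_to_real x"
    have a0: "a \<le> 0" unfolding a_def using neg x .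
    have dec: "real_of_int (\<Sum>i\<in>UNIV. Lv $ i * x $ i) = of_int q * a
        - (\<Sum>i\<in>UNIV. (of_int q * E$i - of_int (Lv$i)) * real_of_int (x$i))"
      unfolding a_def Eivr by (simp add: sum_subtractf sum_distrib_left algebra_simps)
    have "\<bar>\<Sum>i\<in>UNIV. (of_int q * E$i - of_int (Lv$i)) * real_of_int (x$i)\<bar>
        \<le> (\<Sum>i\<in>UNIV. \<bar>(of_int q * E$i - of_int (Lv$i)) * real_of_int (x$i)\<bar>)" by (rule sum_abs)
    also have "\<dots> \<le> (\<Sum>i\<in>UNIV. (1 / real N) * \<bar>real_of_int (x$i)\<bar>)"
    proof (intro sum_mono)
      fix i
      have "\<bar>of_int q * E$i - of_int (Lv$i)\<bar> * \<bar>real_of_int (x$i)\<bar> \<le> (1 / real N) * \<bar>real_of_int (x$i)\<bar>"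
        using app[of i] by (intro mult_right_mono) auto
      then show "\<bar>(of_int q * E$i - of_int (Lv$i)) * real_of_int (x$i)\<bar> \<le> (1 / real N) * \<bar>real_of_int (x$i)\<bar>"
        by (simp only: abs_mult)
    qed
    also have "\<dots> = (1 / real N) * (\<Sum>i\<in>UNIV. \<bar>real_of_int (x$i)\<bar>)" by (simp add: sum_distrib_left)
    also have "\<dots> \<le> (1 / real N) * Mc" using Mc[OF x] by (intro mult_left_mono) auto
    also have "\<dots> < \<eta>" using McN by simp
    finally have err: "\<bar>\<Sum>i\<in>UNIV. (of_int q * E$i - of_int (Lv$i)) * real_of_int (x$i)\<bar> < \<eta>" .
    have lt: "real_of_int (\<Sum>i\<in>UNIV. Lv $ i * x $ i) < of_int q * a + \<eta>" using dec err by linarith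
    show ?thesis
    proof (cases "a = 0")
      case True
      then have "real_of_int (\<Sum>i\<in>UNIV. Lv $ i * x $ i) < 1" using lt \<eta>1 by simp
      then show ?thesis by linarith
    next
      case False
      then have "a < 0" using a0 by simp
      then have "\<eta> \<le> - a" using \<eta>le[OF x] unfolding a_def by simp
      moreover have "of_int q * a \<le> a" using q \<open>a < 0\<close> by (simp add: mult_le_cancel_right1)
      ultimately have "real_of_int (\<Sum>i\<in>UNIV. Lv $ i * x $ i) < 0" using lt by linarith
      then show ?thesis by linarith
    qed
  qed
  then show ?thesis using Lv0 by blast
qed

lemma surj_from_vec:
  fixes Lv :: "int ^ 'd"
  assumes Lv: "Lv \<noteq> 0"
  shows "\<exists>L g. is_surj_hom L \<and> g > 0 \<and> (\<forall>x. (\<Sum>i\<in>UNIV. Lv $ i * x $ i) = g * L x)"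
proof -
  define l where "l x = (\<Sum>i\<in>UNIV. Lv $ i * x $ i)" for x :: "int ^ 'd"
  have ladd: "l (x + y) = l x + l y" for x y unfolding l_def by (simp add: algebra_simps sum.distrib)
  define sc where "sc c x = (\<chi> i. c * x $ i)" for c :: int and x :: "int ^ 'd"
  have lsc: "l (sc c x) = c * l x" for c x unfolding l_def sc_def by (simp add: sum_distrib_left algebra_simps)
  have lsub: "l (x + sc (-c) y) = l x - c * l y" for x y c using ladd lsc by simp
  obtain i0 where i0: "Lv $ i0 \<noteq> 0" using Lv by (auto simp: vec_eq_iff)
  have lax: "l (axis i0 1) = Lv $ i0" unfolding l_def axis_def by (simp add: if_distrib cong: if_cong)
  define P where "P = {k::nat. k > 0 \<and> int k \<in> range l}"
  have nP: "nat \<bar>Lv $ i0\<bar> \<in> P"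
  proof (cases "Lv $ i0 > 0")
    case True then show ?thesis unfolding P_def using lax by (auto intro!: range_eqI[of _ _ "axis i0 1"])
  next
    case False
    then have "l (sc (-1) (axis i0 1)) = \<bar>Lv $ i0\<bar>" using lsc lax i0 by simp
    then show ?thesis unfolding P_def using i0 by (auto intro!: range_eqI[of _ _ "sc (-1) (axis i0 1)"])
  qed
  define g where "g = (LEAST k. k \<in> P)"
  have gP: "g \<in> P" unfolding g_def using nP by (rule LeastI)
  have gmin: "k \<in> P \<Longrightarrow> g \<le> k" for k unfolding g_def by (rule Least_le)
  obtain xg where xg: "l xg = int g" using gP unfolding P_def by (auto simp: image_iff)
  have g0: "g > 0" using gP unfolding P_def by simp
  have dv: "int g dvd l x" for x
  proof -
    define y where "y = l x"
    have "y mod int g = l (x + sc (-(y div int g)) xg)" unfolding lsub xg y_def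
      by (simp add: mod_div_mult_eq minus_div_mult_eq_mod algebra_simps)
    moreover have "0 \<le> y mod int g" "y mod int g < int g" using g0 by auto
    ultimately have "y mod int g = 0"
    proof -
      assume r: "y mod int g = l (x + sc (-(y div int g)) xg)" and b: "0 \<le> y mod int g" "y mod int g < int g"
      show ?thesis
      proof (rule ccontr)
        assume "y mod int g \<noteq> 0"
        then have "nat (y mod int g) \<in> P" unfolding P_def using b r by (auto intro!: range_eqI)
        then have "g \<le> nat (y mod int g)" by (rule gmin)
        then show False using b by linarith
      qed
    qed
    then show ?thesis unfolding y_def by (simp add: dvd_eq_mod_eq_0)
  qed
  define L where "L x = l x div int g" for x
  have Ladd: "L (x + y) = L x + L y" for x y unfolding L_def ladd using dv
    by (simp add: div_plus_div_distrib_dvd_left)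
  have Lsurj: "surj L"
  proof -
    have "L (sc k xg) = k" for k unfolding L_def lsc xg using g0 by simp
    then show ?thesis unfolding surj_def by metis
  qed
  have "\<forall>x. l x = int g * L x" unfolding L_def using dv by simp
  then show ?thesis unfolding is_surj_hom_def l_def using Ladd Lsurj g0 by (intro exI[of _ L] exI[of _ "int g"]) auto
qed

lemma trancl_path:
  "(a, b) \<in> {(x, y). A x y}\<^sup>+ \<Longrightarrow> \<exists>ps. successively A ps \<and> hd ps = a \<and> last ps = b \<and> length ps \<ge> 2"
proof (induction rule: trancl_induct)
  case (base y)
  then show ?case by (intro exI[of _ "[a, y]"]) auto
next
  case (step y z)
  then obtain ps where ps: "successively A ps" "hd ps = a" "last ps = y" "length ps \<ge> 2" by blast
  have ne: "ps \<noteq> []" using ps(4) by auto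
  have "successively A (ps @ [z])" using ps step(2) ne by (auto simp: successively_append_iff)
  then show ?case using ps ne by (intro exI[of _ "ps @ [z]"]) auto
qed

lemma glue:
  assumes "xs \<noteq> []" "ys \<noteq> []" "last xs = hd ys"
  shows "wsum g (xs @ tl ys) = wsum g xs + wsum g ys"
    and "successively A xs \<Longrightarrow> successively A ys \<Longrightarrow> successively A (xs @ tl ys)"
    and "last (xs @ tl ys) = last ys"
    and "hd (xs @ tl ys) = hd xs"
    and "length (xs @ tl ys) \<ge> length xs"
proof -
  define y where "y = hd ys"
  have xs: "xs = butlast xs @ [y]" using assms unfolding y_def by (metis append_butlast_last_id)
  have ys: "ys = y # tl ys" using assms unfolding y_def by simp
  have e: "xs @ tl ys = butlast xs @ y # tl ys" by (subst xs) simp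
  show "wsum g (xs @ tl ys) = wsum g xs + wsum g ys"
    unfolding e using wsum_append[of g "butlast xs" y "tl ys"] xs ys by metis
  show "successively A xs \<Longrightarrow> successively A ys \<Longrightarrow> successively A (xs @ tl ys)"
    unfolding e using succ_join[of A "butlast xs" y "tl ys"] xs ys by metis
  show "last (xs @ tl ys) = last ys"
    using assms by (cases ys) auto
  show "hd (xs @ tl ys) = hd xs" using assms by simp
  show "length (xs @ tl ys) \<ge> length xs" by simp
qed

primrec rep :: "'a list \<Rightarrow> nat \<Rightarrow> 'a list" where
  "rep c 0 = [hd c]"
| "rep c (Suc k) = rep c k @ tl c"

lemma rep:
  fixes g :: "'a \<Rightarrow> 'a \<Rightarrow> real"
  assumes c: "cw A c"
  shows "rep c k \<noteq> [] \<and> hd (rep c k) = hd c \<and> last (rep c k) = hd c \<and> successively A (rep c k)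
         \<and> wsum g (rep c k) = real k * wsum g c"
proof (induction k)
  case 0 then show ?case by simp
next
  case (Suc k)
  have cne: "c \<noteq> []" using c unfolding cw_def by auto
  have lc: "last c = hd c" using c unfolding cw_def by simp
  have sc: "successively A c" using c unfolding cw_def by simp
  have l: "last (rep c k) = hd c" using Suc by simp
  note G = glue[of "rep c k" c, OF _ cne l]
  show ?case using Suc G(1)[where g=g] G(2)[where A=A] G(3) G(4) sc lc by (auto simp: algebra_simps)
qed

lemma loop_at:
  fixes g :: "'a \<Rightarrow> 'a \<Rightarrow> real"
  assumes tr: "sft_transitive A" and c: "cw A c" and pos: "wsum g c > 0"
  shows "\<exists>ys. cw A ys \<and> hd ys = q0 \<and> wsum g ys > 0"
proof -
  obtain P where P: "successively A P" "hd P = q0" "last P = hd c" "length P \<ge> 2"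
    using trancl_path[of q0 "hd c" A] tr unfolding sft_transitive_def by blast
  obtain Q where Q: "successively A Q" "hd Q = hd c" "last Q = q0" "length Q \<ge> 2"
    using trancl_path[of "hd c" q0 A] tr unfolding sft_transitive_def by blast
  obtain k :: nat where k: "real k > (\<bar>wsum g P\<bar> + \<bar>wsum g Q\<bar>) / wsum g c"
    using reals_Archimedean2 by blast
  have kc: "real k * wsum g c > \<bar>wsum g P\<bar> + \<bar>wsum g Q\<bar>" using k pos by (simp add: field_simps)
  define R where "R = rep c k"
  have R: "R \<noteq> []" "hd R = hd c" "last R = hd c" "successively A R" "wsum g R = real k * wsum g c"
    using rep[OF c, of k g] unfolding R_def by auto
  have Pne: "P \<noteq> []" using P(4) by auto
  have Qne: "Q \<noteq> []" using Q(4) by auto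
  define Y1 where "Y1 = P @ tl R"
  have l1: "last P = hd R" using P(3) R(2) by simp
  note G1 = glue[of P R, OF Pne R(1) l1]
  have Y1: "Y1 \<noteq> []" "hd Y1 = q0" "last Y1 = hd c" "successively A Y1" "length Y1 \<ge> 2"
      "wsum g Y1 = wsum g P + real k * wsum g c"
    using G1(1)[where g=g] G1(2)[where A=A] G1(3) G1(4) G1(5) P R unfolding Y1_def by auto
  define Y where "Y = Y1 @ tl Q"
  have l2: "last Y1 = hd Q" using Y1(3) Q(2) by simp
  note G2 = glue[of Y1 Q, OF Y1(1) Qne l2]
  have Y: "hd Y = q0" "last Y = q0" "successively A Y" "length Y \<ge> 2"
      "wsum g Y = wsum g P + real k * wsum g c + wsum g Q"
    using G2(1)[where g=g] G2(2)[where A=A] G2(3) G2(4) G2(5) Y1 Q unfolding Y_def by auto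
  have "wsum g Y > 0" using Y(5) kc by linarith
  moreover have "cw A Y" unfolding cw_def using Y by simp
  ultimately show ?thesis using Y(1) by blast
qed

lemma inner_ivr_hom:
  fixes E :: "real ^ 'd"
  shows "wsum (\<lambda>a b. E \<bullet> int_vec_to_real (H a b)) xs = E \<bullet> int_vec_to_real (wsum H xs)"
  using wsum_hom[of "\<lambda>x. E \<bullet> int_vec_to_real x" H xs]
  by (simp add: ivr_add ivr_zero inner_add_right)

lemma pos_dir:
  fixes A :: "'a::finite \<Rightarrow> 'a \<Rightarrow> bool" and H :: "'a \<Rightarrow> 'a \<Rightarrow> int ^ 'd" and E :: "real ^ 'd"
  assumes hyp: "\<forall>L :: int ^ 'd \<Rightarrow> int. is_surj_hom L \<longrightarrow> (\<forall>B. \<exists>s\<in>sft A. \<exists>m. L (hsum H s m) > B)"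
    and E: "E \<noteq> 0"
  shows "\<exists>xs. cw A xs \<and> wsum (\<lambda>a b. E \<bullet> int_vec_to_real (H a b)) xs > 0"
proof (rule ccontr)
  assume neg: "\<not> ?thesis"
  have nc: "E \<bullet> int_vec_to_real (wsum H xs) \<le> 0" if "cw A xs" for xs
  proof -
    have "\<not> (wsum (\<lambda>a b. E \<bullet> int_vec_to_real (H a b)) xs > 0)" using neg that by blast
    then show ?thesis using inner_ivr_hom[of E H xs] by simp
  qed
  define N where "N = card (UNIV::'a set)"
  define CW where "CW = {xs. cw A xs \<and> length xs \<le> N + 1}"
  have finCW: "finite CW"
    by (rule finite_subset[OF _ finite_lists_length_le[of "UNIV::'a set" "N + 1"]]) (auto simp: CW_def)
  have h1: "\<And>x. x \<in> wsum H ` CW \<Longrightarrow> E \<bullet> int_vec_to_real x \<le> 0" using nc unfolding CW_def by auto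
  have "\<exists>Lv::int ^ 'd. Lv \<noteq> 0 \<and> (\<forall>x\<in>wsum H ` CW. (\<Sum>i\<in>UNIV. Lv $ i * x $ i) \<le> 0)"
    by (rule dir_sign[OF finite_imageI[OF finCW] E h1])
  then obtain Lv where Lv: "Lv \<noteq> 0" "\<forall>x\<in>wsum H ` CW. (\<Sum>i\<in>UNIV. Lv $ i * x $ i) \<le> 0"
    by (elim exE conjE)
  from surj_from_vec[OF Lv(1)] obtain L gg where L: "is_surj_hom L" "gg > 0" "\<forall>x. (\<Sum>i\<in>UNIV. Lv $ i * x $ i) = gg * L x"
    by (elim exE conjE)
  have Ladd: "\<And>x y. L (x + y) = L x + L y" using L(1) unfolding is_surj_hom_def by simp
  define gL where "gL a b = L (H a b)" for a b
  have gLe: "(\<lambda>a b. L (H a b)) = gL" by (simp add: gL_def fun_eq_iff)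
  have wL: "wsum gL xs = L (wsum H xs)" for xs
    unfolding gLe[symmetric] by (rule wsum_hom[OF Ladd hom_zero[of L, OF Ladd]])
  have short: "wsum gL ys \<le> 0" if "cw A ys" "length ys \<le> card (UNIV::'a set) + 1" for ys
  proof -
    have "ys \<in> CW" using that unfolding CW_def N_def by simp
    then have "gg * L (wsum H ys) \<le> 0" using Lv(2) L(3) by auto
    then show ?thesis unfolding wL using L(2) by (simp add: mult_le_0_iff)
  qed
  have allc: "wsum gL ys \<le> 0" if "cw A ys" for ys using cw_short[of A gL, OF short that] by blast
  define M where "M = (\<Sum>a\<in>UNIV. \<Sum>b\<in>UNIV. \<bar>gL a b\<bar>)"
  have Mb: "gL a b \<le> M" for a b
  proof -
    have "\<bar>gL a b\<bar> \<le> (\<Sum>b\<in>UNIV. \<bar>gL a b\<bar>)" by (rule member_le_sum) auto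
    also have "\<dots> \<le> M" unfolding M_def by (rule member_le_sum[of a]) (auto intro: sum_nonneg)
    finally show ?thesis by simp
  qed
  have M0: "0 \<le> M" unfolding M_def by (auto intro: sum_nonneg)
  have bd: "L (hsum H s m) \<le> int N * M" if "s \<in> sft A" for s m
  proof -
    have "wsum gL (map (\<lambda>i. s (int i)) [0..<Suc m]) \<le> int (card (UNIV::'a set)) * M"
      by (rule bound_path[of A gL M, OF allc Mb M0 sft_succ[OF that, of m]])
    then show ?thesis unfolding L_hsum[of L, OF Ladd] gLe pth_def N_def .
  qed
  have "\<forall>B. \<exists>s\<in>sft A. \<exists>m. L (hsum H s m) > B" using hyp L(1) by blast
  then obtain s m where "s \<in> sft A" "L (hsum H s m) > int N * M" by blast
  then show False using bd[of s m] by simp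
qed

lemma uniform_dir:
  fixes S :: "'l \<Rightarrow> real ^ 'd" and len :: "'l \<Rightarrow> nat" and P :: "'l set"
  assumes cov: "\<And>E. norm E = 1 \<Longrightarrow> \<exists>y\<in>P. E \<bullet> S y > 0" and len: "\<And>y. y \<in> P \<Longrightarrow> len y \<ge> 1"
  shows "\<exists>F \<delta>. finite F \<and> F \<subseteq> P \<and> F \<noteq> {} \<and> \<delta> > 0 \<and> (\<forall>E. norm E = 1 \<longrightarrow> (\<exists>y\<in>F. E \<bullet> S y \<ge> \<delta> * real (len y)))"
proof -
  define yy where "yy E = (SOME y. y \<in> P \<and> E \<bullet> S y > 0)" for E
  have yy: "yy E \<in> P \<and> E \<bullet> S (yy E) > 0" if "norm E = 1" for E
    unfolding yy_def by (rule someI_ex) (use cov[OF that] in blast)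
  define dd where "dd E = E \<bullet> S (yy E) / (2 * real (len (yy E)))" for E
  have dd: "dd E > 0" if "norm E = 1" for E
    using yy[OF that] len[of "yy E"] unfolding dd_def by simp
  define U where "U E = {x. inner (S (yy E)) x > dd E * real (len (yy E))}" for E
  have opn: "open (U E)" for E unfolding U_def by (rule open_halfspace_gt)
  have cover: "sphere (0::real ^ 'd) 1 \<subseteq> (\<Union>E\<in>sphere 0 1. U E)"
  proof
    fix E :: "real ^ 'd" assume E: "E \<in> sphere 0 1"
    then have n: "norm E = 1" by simp
    have l: "real (len (yy E)) > 0" using len[of "yy E"] yy[OF n] by simp
    have "inner (S (yy E)) E = 2 * (dd E * real (len (yy E)))"
      unfolding dd_def using l by (simp add: inner_commute)
    moreover have "dd E * real (len (yy E)) > 0" using dd[OF n] l by simp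
    ultimately have "E \<in> U E" unfolding U_def by simp
    then show "E \<in> (\<Union>E\<in>sphere 0 1. U E)" using E by blast
  qed
  obtain T where T: "T \<subseteq> sphere 0 1" "finite T" "sphere 0 1 \<subseteq> (\<Union>E\<in>T. U E)"
    using compactE_image[OF compact_sphere opn cover] by blast
  obtain i :: 'd where True by blast
  have "axis i (1::real) \<in> sphere 0 1" by simp
  then have Tne: "T \<noteq> {}" using T(3) by blast
  define F where "F = yy ` T"
  define \<delta> where "\<delta> = Min (dd ` T)"
  have \<delta>: "\<delta> > 0" unfolding \<delta>_def using T Tne dd by (subst Min_gr_iff) auto
  have FP: "F \<subseteq> P" unfolding F_def using T(1) yy by auto
  have main: "\<exists>y\<in>F. E \<bullet> S y \<ge> \<delta> * real (len y)" if "norm E = 1" for E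
  proof -
    have "E \<in> sphere 0 1" using that by simp
    then obtain E0 where E0: "E0 \<in> T" "E \<in> U E0" using T(3) by blast
    have "\<delta> \<le> dd E0" unfolding \<delta>_def using E0(1) T(2) by simp
    then have "\<delta> * real (len (yy E0)) \<le> dd E0 * real (len (yy E0))" by (intro mult_right_mono) auto
    moreover have "E \<bullet> S (yy E0) > dd E0 * real (len (yy E0))" using E0(2) unfolding U_def by (simp add: inner_commute)
    ultimately show ?thesis unfolding F_def using E0(1) by (intro bexI[of _ "yy E0"]) auto
  qed
  show ?thesis using T(2) FP Tne \<delta> main unfolding F_def by (intro exI[of _ "yy ` T"] exI[of _ \<delta>]) auto
qed

lemma back_dir:
  fixes A :: "'a::finite \<Rightarrow> 'a \<Rightarrow> bool" and H :: "'a \<Rightarrow> 'a \<Rightarrow> int ^ 'd"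
  assumes tr: "sft_transitive A"
    and hyp: "\<forall>L :: int ^ 'd \<Rightarrow> int. is_surj_hom L \<longrightarrow> (\<forall>B. \<exists>s\<in>sft A. \<exists>m. L (hsum H s m) > B)"
  shows "(0::real ^ 'd) \<in> interior (rot_set A H)"
proof -
  define q0 :: 'a where "q0 = undefined"
  define S where "S ys = wsum (\<lambda>a b. int_vec_to_real (H a b)) ys" for ys
  define len where "len ys = length ys - 1" for ys :: "'a list"
  define P where "P = {ys. cw A ys \<and> hd ys = q0}"
  have Sivr: "S ys = int_vec_to_real (wsum H ys)" for ys
    unfolding S_def by (rule wsum_hom[of int_vec_to_real H, OF ivr_add ivr_zero])
  have cov: "\<exists>y\<in>P. E \<bullet> S y > 0" if "norm E = 1" for E :: "real ^ 'd"
  proof -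
    have E: "E \<noteq> 0" using that by auto
    obtain xs where xs: "cw A xs" "wsum (\<lambda>a b. E \<bullet> int_vec_to_real (H a b)) xs > 0"
      using pos_dir[OF hyp E] by blast
    obtain ys where ys: "cw A ys" "hd ys = q0" "wsum (\<lambda>a b. E \<bullet> int_vec_to_real (H a b)) ys > 0"
      using loop_at[OF tr xs(1) xs(2), of q0] by blast
    have "E \<bullet> S ys > 0" using ys(3) unfolding inner_ivr_hom Sivr .
    then show ?thesis using ys unfolding P_def by blast
  qed
  have lenP: "len y \<ge> 1" if "y \<in> P" for y using that unfolding P_def len_def cw_def by auto
  obtain F \<delta> where F: "finite F" "F \<subseteq> P" "F \<noteq> {}" "\<delta> > 0"
      "\<forall>E. norm E = 1 \<longrightarrow> (\<exists>y\<in>F. E \<bullet> S y \<ge> \<delta> * real (len y))"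
    using uniform_dir[where S=S and len=len and P=P, OF cov lenP] by blast
  have loops: "cw A ys \<and> hd ys = q0" if "ys \<in> F" for ys using that F(2) unfolding P_def by blast
  have "ball 0 \<delta> \<subseteq> rot_set A H"
  proof
    fix v :: "real ^ 'd" assume "v \<in> ball 0 \<delta>"
    then have nv: "norm v < \<delta>" by simp
    have dir: "\<exists>ys\<in>F. e \<bullet> (wsum (\<lambda>a b. int_vec_to_real (H a b)) ys - real (length ys - 1) *\<^sub>R v) \<le> 0" for e
    proof (cases "e = 0")
      case True
      then show ?thesis using F(3) by auto
    next
      case False
      define u where "u = - ((1 / norm e) *\<^sub>R e)"
      have nu: "norm u = 1" unfolding u_def using False by simp
      obtain ys where ys: "ys \<in> F" "u \<bullet> S ys \<ge> \<delta> * real (len ys)" using F(5) nu by blast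
      have eu: "e = - (norm e *\<^sub>R u)" unfolding u_def using False by simp
      have ne: "norm e > 0" using False by simp
      have a: "e \<bullet> S ys = - (norm e * (u \<bullet> S ys))" by (subst eu) (simp add: inner_minus_left)
      have a2: "e \<bullet> S ys \<le> - (norm e * (\<delta> * real (len ys)))"
        unfolding a using ys(2) ne by (simp add: mult_left_mono)
      have cs: "\<bar>e \<bullet> v\<bar> \<le> norm e * norm v" by (rule Cauchy_Schwarz_ineq2)
      have "- (norm e * \<delta>) \<le> e \<bullet> v"
      proof -
        have "norm e * norm v \<le> norm e * \<delta>" using nv ne by (intro mult_left_mono) auto
        then show ?thesis using cs by linarith
      qed
      then have b: "real (len ys) * (- (norm e * \<delta>)) \<le> real (len ys) * (e \<bullet> v)" by (intro mult_left_mono) auto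
      have "e \<bullet> (S ys - real (len ys) *\<^sub>R v) = e \<bullet> S ys - real (len ys) * (e \<bullet> v)"
        by (simp add: inner_diff_right)
      also have "\<dots> \<le> 0" using a2 b by (simp add: algebra_simps)
      finally show ?thesis using ys(1) unfolding S_def len_def by blast
    qed
    obtain s where "s \<in> sft A" "has_rot H s v" using greedy[of F A q0 H v, OF F(1) loops dir] by blast
    then show "v \<in> rot_set A H" unfolding rot_set_def by blast
  qed
  then show ?thesis unfolding mem_interior using F(4) by blast
qed

lemma fwd_dir:
  fixes A :: "'a::finite \<Rightarrow> 'a \<Rightarrow> bool" and H :: "'a \<Rightarrow> 'a \<Rightarrow> int ^ 'd" and L :: "int ^ 'd \<Rightarrow> int"
  assumes int: "(0::real ^ 'd) \<in> interior (rot_set A H)" and L: "is_surj_hom L"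
  shows "\<exists>s\<in>sft A. \<exists>m. L (hsum H s m) > B"
proof -
  obtain e where e: "e > 0" "ball 0 e \<subseteq> rot_set A H" using int unfolding mem_interior by blast
  have Ladd: "\<And>x y. L (x + y) = L x + L y" using L unfolding is_surj_hom_def by simp
  define lv where "lv = (\<chi> i. real_of_int (L (axis i 1)))"
  have linv: "lin_ext L w = lv \<bullet> w" for w unfolding lin_ext_def inner_vec_def lv_def by simp
  have lv0: "lv \<noteq> 0"
  proof
    assume "lv = 0"
    then have z: "L (axis i 1) = 0" for i unfolding lv_def by (simp add: vec_eq_iff)
    obtain x where "L x = 1" using L unfolding is_surj_hom_def by (metis surjD)
    moreover have "L x = 0" using hom_repr[OF Ladd, of x] z by simp
    ultimately show False by simp
  qed
  have nlv: "norm lv > 0" using lv0 by simp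
  define v where "v = (e / 2 / norm lv) *\<^sub>R lv"
  have nv: "norm v = e / 2" unfolding v_def using nlv e(1) by simp
  then have "v \<in> rot_set A H" using e by auto
  then obtain s where s: "s \<in> sft A" "has_rot H s v" unfolding rot_set_def by blast
  define c where "c = lin_ext L v"
  have c: "c > 0"
  proof -
    have "c = (e / 2 / norm lv) * (lv \<bullet> lv)" unfolding c_def linv v_def by simp
    also have "\<dots> = (e / 2) * norm lv" using nlv by (simp add: power2_norm_eq_inner[symmetric] power2_eq_square)
    finally have "c = (e / 2) * norm lv" .
    moreover have "(e / 2) * norm lv > 0" using e(1) nlv by simp
    ultimately show ?thesis by simp
  qed
  define Y where "Y n = (1 / real n) *\<^sub>R int_vec_to_real (hsum H s n)" for n
  have Yl: "Y \<longlonglongrightarrow> v" using s(2) unfolding has_rot_def Y_def .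
  have "(\<lambda>n. lv \<bullet> Y n) \<longlonglongrightarrow> lv \<bullet> v" by (intro tendsto_inner tendsto_const Yl)
  then have "eventually (\<lambda>n. lv \<bullet> Y n > c / 2) sequentially"
    using c unfolding c_def linv by (intro order_tendstoD(1)) auto
  then obtain N1 where N1: "\<And>n. n \<ge> N1 \<Longrightarrow> lv \<bullet> Y n > c / 2" unfolding eventually_sequentially by blast
  obtain N0 :: nat where N0: "real N0 > 2 * \<bar>real_of_int B\<bar> / c" using reals_Archimedean2 by blast
  define n where "n = max (max N1 N0) 1"
  have n1: "n \<ge> N1" "real n \<ge> real N0" "n \<ge> 1" unfolding n_def by auto
  have Yn: "lv \<bullet> Y n = (1 / real n) * real_of_int (L (hsum H s n))"
    unfolding Y_def linv[symmetric] lin_ext_scale lin_ext_ivr[OF Ladd] ..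
  have "(1 / real n) * real_of_int (L (hsum H s n)) > c / 2" using N1[OF n1(1)] unfolding Yn .
  then have "real_of_int (L (hsum H s n)) > real n * (c / 2)" using n1(3) by (simp add: field_simps)
  moreover have "real n * (c / 2) > \<bar>real_of_int B\<bar>"
  proof -
    have "real N0 * c > 2 * \<bar>real_of_int B\<bar>" using N0 c by (simp add: field_simps)
    moreover have "real n * c \<ge> real N0 * c" using n1(2) c by (intro mult_right_mono) auto
    ultimately show ?thesis by simp
  qed
  ultimately have "real_of_int (L (hsum H s n)) > real_of_int B" by linarith
  then show ?thesis using s(1) by auto
qed

theorem mainTheorem8:
  fixes A :: "'a::finite \<Rightarrow> 'a \<Rightarrow> bool"
    and H :: "'a \<Rightarrow> 'a \<Rightarrow> int ^ 'd"
  assumes trans: "sft_transitive A"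
  shows "(\<forall>L :: int ^ 'd \<Rightarrow> int. is_surj_hom L \<longrightarrow>
           (\<exists>C :: real. C > 0 \<and>
              ((\<exists>s \<in> sft A. \<exists>n > 0. real_of_int (L (hsum H s n)) > C) \<longrightarrow>
                 (\<exists>s' \<in> sft A. \<exists>n'. periodic_pt s' n' \<and>
                    (\<exists>v. has_rot H s' v \<and> lin_ext L v > 0))) \<and>
              ((\<exists>s \<in> sft A. \<exists>n > 0. real_of_int (L (hsum H s n)) < - C) \<longrightarrow>
                 (\<exists>s'' \<in> sft A. \<exists>v. has_rot H s'' v \<and> lin_ext L v < 0))))
       \<and> ((0 :: real ^ 'd) \<in> interior (rot_set A H) \<longleftrightarrow>
          (\<forall>L :: int ^ 'd \<Rightarrow> int. is_surj_hom L \<longrightarrow>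
             (\<forall>B. \<exists>s \<in> sft A. \<exists>m. L (hsum H s m) > B)))"
proof (intro conjI allI impI iffI)
  fix L :: "int ^ 'd \<Rightarrow> int"
  assume L: "is_surj_hom L"
  then have Ladd: "\<And>x y. L (x + y) = L x + L y" unfolding is_surj_hom_def by simp
  show "\<exists>C :: real. C > 0 \<and>
              ((\<exists>s \<in> sft A. \<exists>n > 0. real_of_int (L (hsum H s n)) > C) \<longrightarrow>
                 (\<exists>s' \<in> sft A. \<exists>n'. periodic_pt s' n' \<and>
                    (\<exists>v. has_rot H s' v \<and> lin_ext L v > 0))) \<and>
              ((\<exists>s \<in> sft A. \<exists>n > 0. real_of_int (L (hsum H s n)) < - C) \<longrightarrow>
                 (\<exists>s'' \<in> sft A. \<exists>v. has_rot H s'' v \<and> lin_ext L v < 0))"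
    by (rule part1[OF Ladd])
next
  fix L :: "int ^ 'd \<Rightarrow> int" and B :: int
  assume "(0 :: real ^ 'd) \<in> interior (rot_set A H)" "is_surj_hom L"
  then show "\<exists>s \<in> sft A. \<exists>m. L (hsum H s m) > B" by (rule fwd_dir)
next
  assume "\<forall>L :: int ^ 'd \<Rightarrow> int. is_surj_hom L \<longrightarrow> (\<forall>B. \<exists>s \<in> sft A. \<exists>m. L (hsum H s m) > B)"
  then show "(0 :: real ^ 'd) \<in> interior (rot_set A H)" by (rule back_dir[OF trans])
qed

end
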